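(* Let $f:\mathbb{R}^n\to\mathbb{R}$ be twice continuously differentiable with $L$-Lipschitz gradient and let $0<\alpha<\frac1L$. Then the map $g_{\alpha(-f)}=g^1_{\alpha(-f)}\circ g^2_{\alpha(-f)}\circ\cdots\circ g^p_{\alpha(-f)}$ is invertible and its inverse $[g_{\alpha(-f)}]^{-1}$ (the PBCD iteration map, $x_{k+1}=[g_{\alpha(-f)}]^{-1}(x_k)$) is a diffeomorphism of $\mathbb{R}^n$.
   Context: $\|\nabla f(x)-\nabla f(y)\|\le L\|x-y\|$ for all $x,y$, $L>0$. The variable is partitioned as $x=(x(1),\dots,x(p))$, $x(s)\in\mathbb{R}^{n_s}$, $\sum_sn_s=n$; $U_s\in\mathbb{R}^{n\times n_s}$ is the $s$-th block-column of $I_n$ and $\nabla_sf(x)=U_s^T\nabla f(x)$. Define $g^s_{\alpha(-f)}(x)=x+\alpha U_s\nabla_s f(x)$, $s=1,\dots,p$. *)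

theory Defs
  imports "HOL-Analysis.Analysis"
begin

definition C1_map :: "('a::real_normed_vector \<Rightarrow> 'b::real_normed_vector) \<Rightarrow> bool" where
  "C1_map h \<longleftrightarrow> (\<exists>D :: 'a \<Rightarrow> 'a \<Rightarrow>\<^sub>L 'b.
      (\<forall>x. (h has_derivative blinfun_apply (D x)) (at x)) \<and> continuous_on UNIV D)"

definition diffeomorphism :: "('a::real_normed_vector \<Rightarrow> 'a) \<Rightarrow> bool" where
  "diffeomorphism h \<longleftrightarrow> bij h \<and> C1_map h \<and> C1_map (inv h)"

text \<open>U_s (nabla_s f)(x): keep the gradient components belonging to block B s, zero elsewhere.\<close>
definition block_part :: "('n::finite) set \<Rightarrow> real^'n \<Rightarrow> real^'n" where
  "block_part S v = (\<chi> i. if i \<in> S then v $ i else 0)"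

definition g_block :: "real \<Rightarrow> (real^'n \<Rightarrow> real^'n) \<Rightarrow> ('n::finite) set \<Rightarrow> real^'n \<Rightarrow> real^'n" where
  "g_block \<alpha> gradf S x = x + \<alpha> *\<^sub>R block_part S (gradf x)"

definition g_comp :: "real \<Rightarrow> (real^'n \<Rightarrow> real^'n) \<Rightarrow> (nat \<Rightarrow> ('n::finite) set) \<Rightarrow> nat
    \<Rightarrow> real^'n \<Rightarrow> real^'n" where
  "g_comp \<alpha> gradf B p = foldr (\<lambda>s h. g_block \<alpha> gradf (B s) \<circ> h) [1..<p+1] id"

end

theory Submission imports Defs begin

lemma deriv_bound:
  fixes F :: "'a::real_normed_vector \<Rightarrow> 'b::real_normed_vector"
  assumes der: "(F has_derivative F') (at x)"
    and lip: "\<forall>y z. norm (F y - F z) \<le> k * norm (y - z)"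
  shows "norm (F' v) \<le> k * norm v"
proof (cases "v = 0")
  case True
  have "linear F'" using der has_derivative_linear by blast
  then show ?thesis using True by (simp add: linear_0)
next
  case False
  have bl: "bounded_linear F'" using der has_derivative_bounded_linear by blast
  have "norm (F' v) \<le> (k + e) * norm v" if e: "e > 0" for e
  proof -
    obtain d where d: "d > 0" "\<forall>y. norm (y - x) < d \<longrightarrow> norm (F y - F x - F' (y - x)) \<le> e * norm (y - x)"
      using der e unfolding has_derivative_at_alt by blast
    define t where "t = d / (2 * norm v)"
    have t: "t > 0" using d False by (simp add: t_def)
    have "norm ((x + t *\<^sub>R v) - x) < d" using d False by (simp add: t_def)
    then have 1: "norm (F (x + t *\<^sub>R v) - F x - F' (t *\<^sub>R v)) \<le> e * (t * norm v)"
      using d(2)[rule_format, of "x + t *\<^sub>R v"] t by simp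
    have 2: "norm (F (x + t *\<^sub>R v) - F x) \<le> k * (t * norm v)"
      using lip[rule_format, of "x + t *\<^sub>R v" x] t by simp
    have "norm (F' (t *\<^sub>R v)) \<le> norm (F (x + t *\<^sub>R v) - F x) + norm (F (x + t *\<^sub>R v) - F x - F' (t *\<^sub>R v))"
      by (metis norm_triangle_ineq4 diff_diff_eq2 diff_self diff_zero norm_minus_commute add_diff_cancel_left' norm_triangle_sub)
    also have "\<dots> \<le> (k + e) * (t * norm v)" using 1 2 by (simp add: algebra_simps)
    finally have "t * norm (F' v) \<le> t * ((k + e) * norm v)"
      using t by (simp add: linear_simps(5)[OF bl] algebra_simps)
    then show ?thesis using t by simp
  qed
  note H = this
  have nv: "norm v > 0" using False by simp
  show ?thesis
  proof (rule field_le_epsilon)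
    fix e :: real assume e: "e > 0"
    have "norm (F' v) \<le> (k + e / norm v) * norm v" using H[of "e / norm v"] e nv by simp
    also have "\<dots> = k * norm v + e" using nv by (simp add: field_simps)
    finally show "norm (F' v) \<le> k * norm v + e" .
  qed
qed

lemma diffeo_id_plus:
  fixes \<phi> :: "'a::euclidean_space \<Rightarrow> 'a" and D\<phi> :: "'a \<Rightarrow> 'a \<Rightarrow>\<^sub>L 'a"
  assumes k: "0 \<le> k" "k < 1"
    and lip: "\<forall>x y. norm (\<phi> x - \<phi> y) \<le> k * norm (x - y)"
    and der: "\<forall>x. (\<phi> has_derivative blinfun_apply (D\<phi> x)) (at x)"
    and cont: "continuous_on UNIV D\<phi>"
  shows "diffeomorphism (\<lambda>x. x + \<phi> x)"
proof -
  define h where "h = (\<lambda>x. x + \<phi> x)"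
  define c where "c = 1 - k"
  have c: "c > 0" using k by (simp add: c_def)
  have lower: "c * norm (x - y) \<le> norm (h x - h y)" for x y
  proof -
    have eq: "x - y = (h x - h y) - (\<phi> x - \<phi> y)" by (simp add: h_def algebra_simps)
    have "norm (x - y) \<le> norm (h x - h y) + norm (\<phi> x - \<phi> y)"
      unfolding eq by (rule norm_triangle_ineq4)
    then show ?thesis using lip[rule_format, of x y] by (simp add: c_def algebra_simps)
  qed
  have inj: "inj h"
  proof (rule injI)
    fix x y assume "h x = h y"
    then have "c * norm (x - y) \<le> 0" using lower[of x y] by simp
    then show "x = y" using c by (simp add: mult_le_0_iff)
  qed
  have surj: "surj h"
  proof -
    have "\<exists>x. h x = y" for y
    proof -
      have "\<exists>!x. (\<lambda>x. y - \<phi> x) x = x"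
      proof (rule banach_fix_type[OF k])
        show "\<forall>x z. dist (y - \<phi> x) (y - \<phi> z) \<le> k * dist x z"
          using lip by (simp add: dist_norm norm_minus_commute)
      qed
      then obtain x where "y - \<phi> x = x" by auto
      then have "h x = y" by (simp add: h_def algebra_simps)
      then show ?thesis by blast
    qed
    then show ?thesis by (metis surjI)
  qed
  have bij: "bij h" using inj surj by (simp add: bij_def)
  define g where "g = inv h"
  have hg: "h (g y) = y" for y unfolding g_def using surj by (simp add: surj_f_inv_f)
  have gh: "g (h x) = x" for x unfolding g_def using inj by (simp add: inv_f_f)
  define Dh where "Dh x = id_blinfun + D\<phi> x" for x
  have Dh_apply: "blinfun_apply (Dh x) v = v + D\<phi> x v" for x v
    by (simp add: Dh_def blinfun.add_left)
  have derh: "(h has_derivative blinfun_apply (Dh x)) (at x)" for x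
  proof -
    have "(h has_derivative (\<lambda>v. v + D\<phi> x v)) (at x)"
      unfolding h_def by (rule has_derivative_add[OF has_derivative_ident der[rule_format]])
    moreover have "blinfun_apply (Dh x) = (\<lambda>v. v + D\<phi> x v)" using Dh_apply by auto
    ultimately show ?thesis by simp
  qed
  have Dbound: "norm (D\<phi> x v) \<le> k * norm v" for x v
    using deriv_bound[OF der[rule_format] lip] .
  have lowerD: "c * norm v \<le> norm (Dh x v)" for x v
  proof -
    have eq: "v = Dh x v - D\<phi> x v" by (simp add: Dh_apply)
    have "norm v \<le> norm (Dh x v) + norm (D\<phi> x v)"
      by (subst eq) (rule norm_triangle_ineq4)
    then show ?thesis using Dbound[of x v] by (simp add: c_def algebra_simps)
  qed
  have linD: "linear (blinfun_apply (Dh x))" for x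
    by (simp add: blinfun.bounded_linear_right bounded_linear.linear)
  have injD: "inj (blinfun_apply (Dh x))" for x
  proof (rule injI)
    fix u v assume "Dh x u = Dh x v"
    then have "Dh x (u - v) = 0" by (simp add: blinfun.diff_right)
    then have "c * norm (u - v) \<le> 0" using lowerD[of "u - v" x] by simp
    then show "u = v" using c by (simp add: mult_le_0_iff)
  qed
  have "\<forall>x. \<exists>A'. linear A' \<and> (\<forall>v. A' (Dh x v) = v) \<and> (\<forall>v. Dh x (A' v) = v)"
    using linear_injective_isomorphism[OF linD injD] by auto
  then obtain Ai where Ai: "\<And>x. linear (Ai x)" "\<And>x v. Ai x (Dh x v) = v" "\<And>x v. Dh x (Ai x v) = v"
    by metis
  have blAi: "bounded_linear (Ai x)" for x using Ai(1) linear_conv_bounded_linear by blast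
  have Aibound: "c * norm (Ai x w) \<le> norm w" for x w
    using lowerD[of "Ai x w" x] Ai(3) by simp
  define Gi where "Gi y = Blinfun (Ai (g y))" for y
  have Gi_apply: "blinfun_apply (Gi y) = Ai (g y)" for y
    by (simp add: Gi_def bounded_linear_Blinfun_apply[OF blAi])
  have conth: "continuous_on UNIV h"
    using derh by (meson continuous_at_imp_continuous_on has_derivative_continuous)
  have derg: "(g has_derivative blinfun_apply (Gi y)) (at y)" for y
  proof -
    have "(g has_derivative Ai (g y)) (at (h (g y)))"
    proof (rule has_derivative_inverse_strong[OF open_UNIV UNIV_I conth])
      show "\<And>x. x \<in> UNIV \<Longrightarrow> g (h x) = x" using gh by simp
      show "(h has_derivative blinfun_apply (Dh (g y))) (at (g y))" by (rule derh)
      show "blinfun_apply (Dh (g y)) \<circ> Ai (g y) = id" using Ai(3) by (auto simp: fun_eq_iff)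
    qed
    then show ?thesis by (simp add: hg Gi_apply)
  qed
  have contg: "continuous_on UNIV g"
    using derg by (meson continuous_at_imp_continuous_on has_derivative_continuous)
  have contDh: "continuous_on UNIV Dh"
    unfolding Dh_def by (intro continuous_on_add continuous_on_const cont)
  have contDhg: "continuous_on UNIV (\<lambda>y. Dh (g y))"
    using continuous_on_compose2[OF contDh contg] by simp
  have Gi_diff: "norm (Gi y - Gi y') \<le> norm (Dh (g y) - Dh (g y')) / (c * c)" for y y'
  proof (rule norm_blinfun_bound)
    show "0 \<le> norm (Dh (g y) - Dh (g y')) / (c * c)" using c by simp
    fix v
    let ?A = "Dh (g y)" and ?B = "Dh (g y')" and ?a = "Ai (g y)" and ?b = "Ai (g y')"
    have eq: "?a v - ?b v = ?a ((?B - ?A) (?b v))"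
    proof -
      have "?a ((?B - ?A) (?b v)) = ?a (?B (?b v) - ?A (?b v))" by (simp add: blinfun.diff_left)
      also have "\<dots> = ?a v - ?b v"
        using Ai(2,3) linear_diff[OF Ai(1)] by simp
      finally show ?thesis by simp
    qed
    have "c * norm (?a v - ?b v) \<le> norm ((?B - ?A) (?b v))" unfolding eq by (rule Aibound)
    also have "\<dots> \<le> norm (?B - ?A) * norm (?b v)" by (rule norm_blinfun)
    finally have 1: "c * norm (?a v - ?b v) \<le> norm (?B - ?A) * norm (?b v)" .
    have 2: "c * norm (?b v) \<le> norm v" by (rule Aibound)
    have "c * (c * norm (?a v - ?b v)) \<le> c * (norm (?B - ?A) * norm (?b v))"
      using 1 c by (simp add: mult_left_mono)
    also have "\<dots> = norm (?B - ?A) * (c * norm (?b v))" by simp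
    also have "\<dots> \<le> norm (?B - ?A) * norm v" using 2 by (simp add: mult_left_mono)
    finally have "(c * c) * norm (?a v - ?b v) \<le> norm (?A - ?B) * norm v"
      by (simp add: norm_minus_commute mult.assoc)
    then have "norm (?a v - ?b v) \<le> norm (?A - ?B) * norm v / (c * c)"
      using c by (simp add: field_simps)
    then show "norm ((Gi y - Gi y') v) \<le> norm (Dh (g y) - Dh (g y')) / (c * c) * norm v"
      by (simp add: blinfun.diff_left Gi_apply)
  qed
  have contGi: "continuous_on UNIV Gi"
    unfolding continuous_on_iff
  proof (intro ballI allI impI)
    fix y e assume "y \<in> (UNIV :: 'a set)" "(e::real) > 0"
    then have "e * (c * c) > 0" using c by simp
    then obtain d where d: "d > 0" "\<forall>y'\<in>UNIV. dist y' y < d \<longrightarrow> dist (Dh (g y')) (Dh (g y)) < e * (c * c)"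
      using contDhg unfolding continuous_on_iff by blast
    show "\<exists>d>0. \<forall>y'\<in>UNIV. dist y' y < d \<longrightarrow> dist (Gi y') (Gi y) < e"
    proof (intro exI conjI ballI impI)
      fix y' assume "dist y' y < d"
      then have "norm (Dh (g y') - Dh (g y)) < e * (c * c)" using d by (simp add: dist_norm)
      then have "norm (Dh (g y') - Dh (g y)) / (c * c) < e" using c by (simp add: field_simps)
      then show "dist (Gi y') (Gi y) < e" using Gi_diff[of y' y] by (simp add: dist_norm)
    qed (rule d(1))
  qed
  have C1h: "C1_map h" unfolding C1_map_def using derh contDh by blast
  have C1g: "C1_map g" unfolding C1_map_def using derg contGi by blast
  show ?thesis using bij C1h C1g unfolding diffeomorphism_def h_def g_def by simp
qed

lemma C1_comp:
  fixes f :: "'b::real_normed_vector \<Rightarrow> 'c::real_normed_vector" and g :: "'a::real_normed_vector \<Rightarrow> 'b"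
  assumes "C1_map f" "C1_map g"
  shows "C1_map (f \<circ> g)"
proof -
  obtain Df where Df: "\<forall>x. (f has_derivative blinfun_apply (Df x)) (at x)" "continuous_on UNIV Df"
    using assms(1) unfolding C1_map_def by blast
  obtain Dg where Dg: "\<forall>x. (g has_derivative blinfun_apply (Dg x)) (at x)" "continuous_on UNIV Dg"
    using assms(2) unfolding C1_map_def by blast
  have contg: "continuous_on UNIV g"
    using Dg(1) by (meson continuous_at_imp_continuous_on has_derivative_continuous)
  have der: "((f \<circ> g) has_derivative blinfun_apply (Df (g x) o\<^sub>L Dg x)) (at x)" for x
  proof -
    have "((f \<circ> g) has_derivative (blinfun_apply (Df (g x)) \<circ> blinfun_apply (Dg x))) (at x)"
      by (rule diff_chain_at[OF Dg(1)[rule_format] Df(1)[rule_format]])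
    moreover have "blinfun_apply (Df (g x)) \<circ> blinfun_apply (Dg x) = blinfun_apply (Df (g x) o\<^sub>L Dg x)"
      by (auto simp: fun_eq_iff)
    ultimately show ?thesis by simp
  qed
  have c1: "continuous_on UNIV (\<lambda>x. Df (g x))"
    using continuous_on_compose2[OF Df(2) contg] by simp
  have "continuous_on UNIV (\<lambda>x. Df (g x) o\<^sub>L Dg x)"
    by (rule bounded_bilinear.continuous_on[OF bounded_bilinear_blinfun_compose c1 Dg(2)])
  then show ?thesis unfolding C1_map_def using der
    by (intro exI[of _ "\<lambda>x. Df (g x) o\<^sub>L Dg x"]) blast
qed

lemma C1_id: "C1_map (id :: 'a::real_normed_vector \<Rightarrow> 'a)"
  unfolding C1_map_def
  by (rule exI[of _ "\<lambda>_. id_blinfun"]) (auto simp: id_def intro: has_derivative_ident)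

lemma diffeo_id: "diffeomorphism (id :: 'a::real_normed_vector \<Rightarrow> 'a)"
  unfolding diffeomorphism_def using C1_id by (simp add: inv_id)

lemma diffeo_comp:
  fixes f g :: "'a::real_normed_vector \<Rightarrow> 'a"
  assumes "diffeomorphism f" "diffeomorphism g"
  shows "diffeomorphism (f \<circ> g)"
  using assms unfolding diffeomorphism_def
  by (simp add: bij_comp o_inv_distrib C1_comp)

lemma diffeo_inv:
  fixes f :: "'a::real_normed_vector \<Rightarrow> 'a"
  assumes "diffeomorphism f"
  shows "diffeomorphism (inv f)"
  using assms unfolding diffeomorphism_def
  by (simp add: bij_imp_bij_inv inv_inv_eq)

lemma block_part_linear: "bounded_linear (block_part S :: real^'n::finite \<Rightarrow> real^'n)"
proof -
  have "linear (block_part S :: real^'n \<Rightarrow> real^'n)"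
    by (rule linearI) (auto simp: block_part_def vec_eq_iff)
  then show ?thesis using linear_conv_bounded_linear by blast
qed

lemma block_part_norm: "norm (block_part S v) \<le> norm (v :: real^'n::finite)"
  by (rule norm_le_componentwise_cart) (simp add: block_part_def)

lemma diffeo_block:
  fixes gradf :: "real^'n::finite \<Rightarrow> real^'n" and H :: "real^'n \<Rightarrow> ((real^'n) \<Rightarrow>\<^sub>L (real^'n))"
  assumes hess: "\<forall>x. (gradf has_derivative blinfun_apply (H x)) (at x)"
    and hess_cont: "continuous_on UNIV H"
    and lipschitz: "\<forall>x y. norm (gradf x - gradf y) \<le> L * norm (x - y)"
    and a: "0 < \<alpha>" "\<alpha> * L < 1" "L > 0"
  shows "diffeomorphism (g_block \<alpha> gradf S)"
proof -
  define \<phi> where "\<phi> x = \<alpha> *\<^sub>R block_part S (gradf x)" for x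
  define P where "P = Blinfun (block_part S :: real^'n \<Rightarrow> real^'n)"
  have P_apply: "blinfun_apply P = block_part S"
    by (simp add: P_def bounded_linear_Blinfun_apply[OF block_part_linear])
  define D where "D x = \<alpha> *\<^sub>R (P o\<^sub>L H x)" for x
  have eq: "g_block \<alpha> gradf S = (\<lambda>x. x + \<phi> x)"
    by (simp add: fun_eq_iff g_block_def \<phi>_def)
  have lip: "\<forall>x y. norm (\<phi> x - \<phi> y) \<le> (\<alpha> * L) * norm (x - y)"
  proof (intro allI)
    fix x y
    have "\<phi> x - \<phi> y = \<alpha> *\<^sub>R block_part S (gradf x - gradf y)"
      by (simp add: \<phi>_def linear_diff[OF bounded_linear.linear[OF block_part_linear]] scaleR_diff_right)
    then have "norm (\<phi> x - \<phi> y) = \<alpha> * norm (block_part S (gradf x - gradf y))" using a by simp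
    also have "\<dots> \<le> \<alpha> * norm (gradf x - gradf y)" using a block_part_norm by (simp add: mult_left_mono)
    also have "\<dots> \<le> \<alpha> * (L * norm (x - y))" using a lipschitz by (simp add: mult_left_mono)
    finally show "norm (\<phi> x - \<phi> y) \<le> (\<alpha> * L) * norm (x - y)" by simp
  qed
  have der: "\<forall>x. (\<phi> has_derivative blinfun_apply (D x)) (at x)"
  proof
    fix x
    have "((\<lambda>x. block_part S (gradf x)) has_derivative (\<lambda>v. block_part S (H x v))) (at x)"
      using bounded_linear.has_derivative[OF block_part_linear hess[rule_format]] .
    then have "(\<phi> has_derivative (\<lambda>v. \<alpha> *\<^sub>R block_part S (H x v))) (at x)"
      unfolding \<phi>_def by (rule has_derivative_scaleR_right)
    moreover have "blinfun_apply (D x) = (\<lambda>v. \<alpha> *\<^sub>R block_part S (H x v))"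
      by (simp add: D_def fun_eq_iff P_apply scaleR_blinfun.rep_eq)
    ultimately show "(\<phi> has_derivative blinfun_apply (D x)) (at x)" by simp
  qed
  have cont: "continuous_on UNIV D"
    unfolding D_def
    by (intro continuous_on_scaleR continuous_on_const
        bounded_bilinear.continuous_on[OF bounded_bilinear_blinfun_compose] hess_cont)
  show ?thesis unfolding eq
    by (rule diffeo_id_plus[OF _ _ lip der cont]) (use a in auto)
qed

theorem proposition8:
  fixes f :: "real^'n \<Rightarrow> real"
    and gradf :: "real^'n \<Rightarrow> real^'n"
    and H :: "real^'n \<Rightarrow> ((real^'n) \<Rightarrow>\<^sub>L (real^'n))"
    and L \<alpha> :: real
    and p :: nat
    and B :: "nat \<Rightarrow> 'n set"
  assumes grad: "\<forall>x. (f has_derivative (\<lambda>h. gradf x \<bullet> h)) (at x)"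
    and hess: "\<forall>x. (gradf has_derivative blinfun_apply (H x)) (at x)"
    and hess_cont: "continuous_on UNIV H"
    and L_pos: "L > 0"
    and lipschitz: "\<forall>x y. norm (gradf x - gradf y) \<le> L * norm (x - y)"
    and alpha: "0 < \<alpha>" "\<alpha> < 1 / L"
    and p_pos: "p \<ge> 1"
    and blocks_nonempty: "\<forall>s\<in>{1..p}. B s \<noteq> {}"
    and blocks_disjoint: "\<forall>s\<in>{1..p}. \<forall>t\<in>{1..p}. s \<noteq> t \<longrightarrow> B s \<inter> B t = {}"
    and blocks_cover: "(\<Union>s\<in>{1..p}. B s) = UNIV"
  shows "bij (g_comp \<alpha> gradf B p) \<and> diffeomorphism (inv (g_comp \<alpha> gradf B p))"
proof -
  have aL: "\<alpha> * L < 1" using alpha L_pos by (simp add: field_simps)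
  have blk: "diffeomorphism (g_block \<alpha> gradf S)" for S
    by (rule diffeo_block[OF hess hess_cont lipschitz alpha(1) aL L_pos])
  have "diffeomorphism (foldr (\<lambda>s h. g_block \<alpha> gradf (B s) \<circ> h) xs id)" for xs
  proof (induction xs)
    case Nil
    show ?case using diffeo_id by (simp add: id_def)
  next
    case (Cons a xs)
    show ?case using diffeo_comp[OF blk Cons.IH] by (simp add: o_def)
  qed
  then have d: "diffeomorphism (g_comp \<alpha> gradf B p)" unfolding g_comp_def by blast
  then show ?thesis using diffeo_inv[OF d] unfolding diffeomorphism_def by blast
qed

end
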